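(* Let $\mathbf{w}\in\Sigma^\omega$ be an infinite word with appearance constant $\mathbf{A}_\mathbf{w}<\infty$. Then $\mathbf{w}[0..n-1]$ has a string attractor of size $O(\mathbf{A}_\mathbf{w}\log n)$ (with an absolute implied constant).
   Context: $\Sigma$ is a finite alphabet; words are indexed from $0$. The appearance constant $\mathbf{A}_\mathbf{w}$ is the least constant $C$ (if any) such that for every $m\ge1$, every length-$m$ factor of $\mathbf{w}$ has an occurrence in the prefix of $\mathbf{w}$ of length at most $Cm$. A string attractor of a finite word $x=x[0..n-1]$ is a set $S\subseteq\{0,\ldots,n-1\}$ such that every nonempty factor of $x$ has an occurrence $x[p..q]$ with $p\le i\le q$ for some $i\in S$. *)

theory Defs
  imports Complex_Main
begin

text \<open>Infinite words are functions nat => 'a (indexed from 0); the alphabet is finite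
  when the range of the word is finite.\<close>

definition appearance_bound :: "(nat \<Rightarrow> 'a) \<Rightarrow> real \<Rightarrow> bool" where
  "appearance_bound w C \<longleftrightarrow>
     (\<forall>m\<ge>1. \<forall>i. \<exists>j. real (j + m) \<le> C * real m \<and> (\<forall>k<m. w (j + k) = w (i + k)))"

definition has_finite_appearance_constant :: "(nat \<Rightarrow> 'a) \<Rightarrow> bool" where
  "has_finite_appearance_constant w \<longleftrightarrow> (\<exists>C. appearance_bound w C)"

definition appearance_constant :: "(nat \<Rightarrow> 'a) \<Rightarrow> real" where
  "appearance_constant w = Inf {C. appearance_bound w C}"

definition string_attractor :: "'a list \<Rightarrow> nat set \<Rightarrow> bool" where
  "string_attractor x S \<longleftrightarrow> S \<subseteq> {..<length x} \<and>
     (\<forall>p q. p \<le> q \<and> q < length x \<longrightarrow>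
        (\<exists>p'. p' + (q - p) < length x \<and>
              (\<forall>k\<le>q - p. x ! (p' + k) = x ! (p + k)) \<and>
              (\<exists>i\<in>S. p' \<le> i \<and> i \<le> p' + (q - p))))"

end

theory Submission
  imports Defs
begin

definition occ :: "(nat \<Rightarrow> nat) \<Rightarrow> nat \<Rightarrow> nat \<Rightarrow> nat \<Rightarrow> bool" where
  "occ w m i j \<longleftrightarrow> (\<forall>k<m. w (j + k) = w (i + k))"

lemma ab_ge1:
  assumes "appearance_bound w C" shows "C \<ge> 1"
proof -
  from assms obtain j where "real (j + 1) \<le> C * real (1::nat)"
    unfolding appearance_bound_def by blast
  thus ?thesis by simp
qed

lemma ab_inf:
  assumes "has_finite_appearance_constant (w::nat \<Rightarrow> nat)"
  shows "appearance_bound w (appearance_constant w)"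
  unfolding appearance_bound_def
proof (intro allI impI)
  fix m i :: nat assume m: "m \<ge> 1"
  from assms obtain C where C: "appearance_bound w C"
    unfolding has_finite_appearance_constant_def by blast
  then obtain j where "\<forall>k<m. w (j + k) = w (i + k)"
    unfolding appearance_bound_def using m by blast
  hence ex: "occ w m i j" by (simp add: occ_def)
  define j0 where "j0 = (LEAST j. occ w m i j)"
  have j0: "occ w m i j0" unfolding j0_def using LeastI[of "occ w m i" j] ex by blast
  have "real (j0 + m) / real m \<le> appearance_constant w"
    unfolding appearance_constant_def
  proof (rule cInf_greatest)
    show "{C. appearance_bound w C} \<noteq> {}" using C by blast
  next
    fix D assume "D \<in> {C. appearance_bound w C}"
    then obtain j where j: "real (j + m) \<le> D * real m" "\<forall>k<m. w (j + k) = w (i + k)"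
      using m unfolding appearance_bound_def mem_Collect_eq by blast
    have "j0 \<le> j" unfolding j0_def by (rule Least_le) (use j in \<open>simp add: occ_def\<close>)
    hence "real (j0 + m) \<le> D * real m" using j(1) by simp
    thus "real (j0 + m) / real m \<le> D" using m by (simp add: divide_le_eq)
  qed
  hence "real (j0 + m) \<le> appearance_constant w * real m" using m by (simp add: divide_le_eq)
  thus "\<exists>j. real (j + m) \<le> appearance_constant w * real m \<and> (\<forall>k<m. w (j + k) = w (i + k))"
    using j0 by (auto simp: occ_def)
qed

lemma ln2_gt: "ln 2 > (1/2::real)"
proof -
  have "exp (1/2::real) * exp (1/2) = exp 1" by (simp flip: exp_add)
  also have "\<dots> < 4" using exp_le by simp
  finally have e4: "exp (1/2::real) * exp (1/2) < 2 * 2" by simp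
  have "exp (1/2::real) < 2"
  proof (rule ccontr)
    assume "\<not> exp (1/2::real) < 2"
    hence "2 \<le> exp (1/2::real)" by simp
    hence "2 * 2 \<le> exp (1/2::real) * exp (1/2)" by (rule mult_mono) (use \<open>2 \<le> exp (1/2::real)\<close> in auto)
    thus False using e4 by simp
  qed
  hence "ln (exp (1/2::real)) < ln 2" by (subst ln_less_cancel_iff) auto
  thus ?thesis by simp
qed

theorem theorem15:
  shows "\<exists>K::real. \<forall>(w::nat \<Rightarrow> nat) (n::nat).
           finite (range w) \<and> has_finite_appearance_constant w \<and> n \<ge> 2 \<longrightarrow>
           (\<exists>S. string_attractor (map w [0..<n]) S \<and>
                real (card S) \<le> K * appearance_constant w * ln (real n))"
proof (rule exI[of _ 12], intro allI impI)
  fix w :: "nat \<Rightarrow> nat" and n :: nat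
  assume H: "finite (range w) \<and> has_finite_appearance_constant w \<and> n \<ge> 2"
  define A where "A = appearance_constant w"
  have AB: "appearance_bound w A" unfolding A_def using H ab_inf by blast
  have A1: "A \<ge> 1" using ab_ge1[OF AB] .
  have n2: "n \<ge> 2" using H by simp
  define L where "L = {k::nat. 2^k \<le> n}"
  define T where "T = {t::nat. real t < 2 * A}"
  define S where "S = (\<Union>k\<in>L. (\<lambda>t. t * 2^k) ` T) \<inter> {..<n}"
  let ?x = "map w [0..<n]"
  have fL: "finite L"
  proof -
    have "L \<subseteq> {..n}"
    proof
      fix k assume "k \<in> L"
      hence "2^k \<le> n" unfolding L_def by simp
      moreover have "k < 2^k" by (rule less_exp)
      ultimately have "k \<le> n" by linarith
      thus "k \<in> {..n}" by simp
    qed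
    thus ?thesis by (rule finite_subset) simp
  qed
  have TT: "T \<subseteq> {..<nat \<lceil>2 * A\<rceil>}" unfolding T_def by (auto simp add: less_ceiling_iff zless_nat_eq_int_zless)
  have fT: "finite T" using TT finite_subset by blast
  have cT: "real (card T) \<le> 3 * A"
  proof -
    have "card T \<le> nat \<lceil>2 * A\<rceil>" using card_mono[OF _ TT] by simp
    hence "real (card T) \<le> real (nat \<lceil>2 * A\<rceil>)" by simp
    also have "\<dots> \<le> 2 * A + 1" using A1 by linarith
    finally show ?thesis using A1 by simp
  qed
  obtain k0 where k0: "2^k0 \<le> n" "n < 2^(k0+1)" using ex_power_ivl1[of 2 n] n2 by auto
  have Leq: "L \<subseteq> {..k0}"
  proof
    fix k assume "k \<in> L"
    hence "(2::nat)^k < 2^(k0+1)" using k0 unfolding L_def by simp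
    hence "k < k0 + 1" using power_less_imp_less_exp[of "2::nat" k "k0+1"] by simp
    thus "k \<in> {..k0}" by simp
  qed
  have k0pos: "k0 \<ge> 1"
  proof (rule ccontr)
    assume "\<not> k0 \<ge> 1" hence "k0 = 0" by simp
    thus False using k0 n2 by simp
  qed
  have cL: "real (card L) \<le> 4 * ln (real n)"
  proof -
    have "card L \<le> k0 + 1" using card_mono[OF _ Leq] by simp
    hence h1: "real (card L) \<le> 2 * real k0" using k0pos by simp
    have "real k0 * ln 2 \<le> ln (real n)"
    proof -
      have "(0::nat) < 2^k0" by simp
      hence n0: "0 < n" using k0(1) by linarith
      have "real (2^k0) \<le> real n" using k0(1) by (simp only: of_nat_le_iff)
      hence "ln (real (2^k0)) \<le> ln (real n)" using n0 by (subst ln_le_cancel_iff) auto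
      thus ?thesis by (simp add: ln_realpow)
    qed
    moreover have "real k0 * (1/2) \<le> real k0 * ln 2"
      using ln2_gt by (intro mult_left_mono) auto
    ultimately show ?thesis using h1 by linarith
  qed
  have cS: "real (card S) \<le> 12 * A * ln (real n)"
  proof -
    have "card S \<le> card (\<Union>k\<in>L. (\<lambda>t. t * 2^k) ` T)"
      unfolding S_def by (rule card_mono) (use fL fT in auto)
    also have "\<dots> \<le> (\<Sum>k\<in>L. card ((\<lambda>t. t * 2^k) ` T))" by (rule card_UN_le[OF fL])
    also have "\<dots> \<le> (\<Sum>k\<in>L. card T)" by (rule sum_mono) (rule card_image_le[OF fT])
    also have "\<dots> = card L * card T" by simp
    finally have "real (card S) \<le> real (card L * card T)" by (simp only: of_nat_le_iff)
    hence "real (card S) \<le> real (card L) * real (card T)" by simp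
    also have "\<dots> \<le> (4 * ln (real n)) * (3 * A)"
      by (rule mult_mono[OF cL cT]) (use n2 in auto)
    finally show ?thesis by (simp add: algebra_simps)
  qed
  have SA: "string_attractor ?x S"
    unfolding string_attractor_def
  proof (intro conjI allI impI)
    show "S \<subseteq> {..<length ?x}" unfolding S_def by auto
  next
    fix p q assume pq: "p \<le> q \<and> q < length ?x"
    define m where "m = q - p + 1"
    have m1: "m \<ge> 1" unfolding m_def by simp
    have qn: "q < n" using pq by simp
    obtain j where j: "real (j + m) \<le> A * real m" "\<forall>k<m. w (j + k) = w (p + k)"
      using AB m1 unfolding appearance_bound_def by blast
    define j0 where "j0 = min j p"
    have j0a: "\<forall>k<m. w (j0 + k) = w (p + k)" unfolding j0_def using j(2) by (simp add: min_def)
    have j0b: "real (j0 + m) \<le> A * real m" unfolding j0_def using j(1) by (simp add: min_def)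
    have j0c: "j0 + m \<le> n" unfolding j0_def m_def using pq by (auto simp add: min_def)
    obtain k where k: "2^k \<le> m" "m < 2^(k+1)" using ex_power_ivl1[of 2 m] m1 by auto
    define t where "t = (j0 + 2^k - 1) div 2^k"
    have pk: "(2::nat)^k > 0" by simp
    have t1: "t * 2^k \<ge> j0"
    proof -
      have "(j0 + 2^k - 1) = t * 2^k + (j0 + 2^k - 1) mod 2^k" unfolding t_def by (rule div_mult_mod_eq[symmetric])
      moreover have "(j0 + 2^k - 1) mod 2^k < 2^k" using pk by simp
      ultimately show ?thesis using pk by linarith
    qed
    have t2: "t * 2^k \<le> j0 + 2^k - 1" unfolding t_def
      by (simp add: div_times_less_eq_dividend)
    have t3: "t * 2^k \<le> j0 + (q - p)" using t2 k(1) unfolding m_def by linarith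
    have t4: "t * 2^k < n" using t3 j0c unfolding m_def by linarith
    have "t * 2^k < j0 + m" using t3 unfolding m_def by simp
    hence "real (t * 2^k) < real (j0 + m)" by (simp only: of_nat_less_iff)
    also have "\<dots> \<le> A * real m" by (rule j0b)
    also have "\<dots> < A * 2^(k+1)"
    proof -
      have "real m < real (2^(k+1))" using k(2) by (simp only: of_nat_less_iff)
      hence "real m < 2^(k+1)" by simp
      thus ?thesis using A1 by (intro mult_strict_left_mono) auto
    qed
    finally have "real t * 2^k < (2 * A) * 2^k" by simp
    hence tT: "t \<in> T" unfolding T_def by simp
    have kL: "k \<in> L" unfolding L_def using k(1) pq unfolding m_def by (simp, linarith)
    have inS: "t * 2^k \<in> S" unfolding S_def using tT kL t4 by auto
    show "\<exists>p'. p' + (q - p) < length ?x \<and>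
              (\<forall>k\<le>q - p. ?x ! (p' + k) = ?x ! (p + k)) \<and>
              (\<exists>i\<in>S. p' \<le> i \<and> i \<le> p' + (q - p))"
    proof (intro exI conjI)
      show "j0 + (q - p) < length ?x" using j0c unfolding m_def by simp
      show "\<forall>k\<le>q - p. ?x ! (j0 + k) = ?x ! (p + k)"
      proof (intro allI impI)
        fix k assume "k \<le> q - p"
        moreover have "k < m" using calculation unfolding m_def by simp
        ultimately have a1: "j0 + k < n" "p + k < n" "w (j0 + k) = w (p + k)"
          using j0a j0c pq unfolding m_def by auto
        thus "?x ! (j0 + k) = ?x ! (p + k)" by simp
      qed
      show "\<exists>i\<in>S. j0 \<le> i \<and> i \<le> j0 + (q - p)" using inS t1 t3 by blast
    qed
  qed
  show "\<exists>S. string_attractor ?x S \<and> real (card S) \<le> 12 * appearance_constant w * ln (real n)"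
    using SA cS unfolding A_def by blast
qed

end
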